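(* Let $Q$ be an $n$-dimensional manifold, $k\ge 1$, and let $L:\mathbb{R}^k\times T^1_kQ\to\mathbb{R}$ be a smooth Lagrangian, written in local coordinates as $L(x^\mu,q^i,q^i_\mu)$. Let $\widetilde L:\mathbb{R}^k\times T^1_kTQ\to\mathbb{R}$ be the prolonged Lagrangian, given in the induced coordinates $(x^\mu,q^i,v^i,q^i_\mu,v^i_\mu)$ by $$\widetilde{L}(x^{\mu},q^i,v^{i},q^i_{\mu},v^{i}_{\mu})=\frac{\partial L}{\partial q^{i}}(x^{\mu},q^i,q^i_{\mu})\,v^{i}+\frac{\partial L}{\partial q^i_{\mu}}(x^{\mu},q^i,q^i_{\mu})\,v^i_{\mu}$$ (summation over repeated indices). Then: (1) For a map $\psi:U\subset\mathbb{R}^k\to TQ$, $\psi(\mathbf{x})=(q^i(\mathbf{x}),v^i(\mathbf{x}))$, with $q^i_\mu=\partial q^i/\partial x^\mu$ and $v^i_\mu=\partial v^i/\partial x^\mu$ evaluated along $\psi$, the Euler–Lagrange field equations of $\widetilde L$, $$\sum_\mu\frac{d}{dx^{\mu}}\Big(\frac{\partial \widetilde L}{\partial q^i_{\mu}}\Big)-\frac{\partial \widetilde L}{\partial q^i}=0,\qquad \sum_\mu\frac{d}{dx^{\mu}}\Big(\frac{\partial \widetilde L}{\partial v^i_{\mu}}\Big)-\frac{\partial \widetilde L}{\partial v^i}=0,\qquad 1\le i\le n,$$ are equivalent to the system $$\sum_\mu\frac{d}{dx^{\mu}}\Big[\frac{\partial^2 L}{\partial q^j\partial q^i_{\mu}}v^j+\frac{\partial^2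 L}{\partial q^j_{\gamma}\partial q^i_{\mu}}v^j_{\gamma}\Big]-\frac{\partial^2 L}{\partial q^i\partial q^j}v^j-\frac{\partial^2 L}{\partial q^i\partial q^j_{\gamma}}v^j_{\gamma}=0,\qquad \sum_\mu\frac{d}{dx^{\mu}}\Big(\frac{\partial L}{\partial q^i_{\mu}}\Big)-\frac{\partial L}{\partial q^i}=0,$$ i.e. the Jacobi field equations for $L$ together with the Euler–Lagrange field equations for $L$. (2) If $L$ is regular, then $\widetilde L$ is regular.
   Context: $T^1_kQ=TQ\oplus\cdots\oplus TQ$ ($k$ copies) is the bundle of $k^1$-velocities of $Q$, with local coordinates $(q^i,q^i_\mu)$, $1\le i\le n$, $1\le\mu\le k$, where $q^i_\mu$ are the components of the $\mu$-th tangent vector; $\mathbb{R}^k$ has coordinates $\mathbf{x}=(x^1,\dots,x^k)$. Similarly $T^1_kTQ$ is the bundle of $k^1$-velocities of the manifold $TQ$, with induced coordinates $(q^i,v^i,q^i_\mu,v^i_\mu)$ where $(q^i,v^i)$ are coordinates on $TQ$. The operator $\frac{d}{dx^\mu}$ denotes the total derivative along the field. A Lagrangian $L$ on $\mathbb{R}^k\times T^1_kQ$ is called regular if the matrix $\big(\frac{\partial^2 L}{\partial q^i_\mu\partial q^j_\nu}\big)$ (rows indexed by $(i,\mu)$, columns by $(j,\nu)$) is nonsingular at every point; regularity of $\widetilde L$ means nonsingularity of its Hessian with respect to all the velocity variables $(q^i_\mu,v^i_\mu)$. *)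

theory Defs
  imports "HOL-Analysis.Analysis"
begin

definition pd :: "('a::real_normed_vector \<Rightarrow> 'b::real_normed_vector) \<Rightarrow> 'a \<Rightarrow> 'a \<Rightarrow> 'b" where
  "pd f w z = vector_derivative (\<lambda>t::real. f (z + t *\<^sub>R w)) (at 0)"

fun iter_pd :: "'a::real_normed_vector list \<Rightarrow> ('a \<Rightarrow> 'b::real_normed_vector) \<Rightarrow> 'a \<Rightarrow> 'b" where
  "iter_pd [] f = f"
| "iter_pd (w # ws) f = pd (iter_pd ws f) w"

definition smooth_on :: "'a::real_normed_vector set \<Rightarrow> ('a \<Rightarrow> 'b::real_normed_vector) \<Rightarrow> bool" where
  "smooth_on U f \<longleftrightarrow> (\<forall>ws. \<forall>z\<in>U. iter_pd ws f differentiable (at z))"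

(* Coordinates on R^k x T^1_k Q: (x, q, Q) with Q $ i $ mu = q^i_mu *)
type_synonym ('n,'k) jet = "(real^'k) \<times> (real^'n) \<times> (real^'k^'n)"
(* Coordinates on R^k x T^1_k TQ: (x, (q,v), (Q,V)) *)
type_synonym ('n,'k) jetT = "(real^'k) \<times> ((real^'n) \<times> (real^'n)) \<times> ((real^'k^'n) \<times> (real^'k^'n))"

definition e_q :: "'n::finite \<Rightarrow> ('n,'k::finite) jet" where
  "e_q i = (0, axis i 1, 0)"
definition e_qd :: "'n::finite \<Rightarrow> 'k::finite \<Rightarrow> ('n,'k) jet" where
  "e_qd i mu = (0, 0, axis i (axis mu 1))"

definition eT_q :: "'n::finite \<Rightarrow> ('n,'k::finite) jetT" where
  "eT_q i = (0, (axis i 1, 0), (0, 0))"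
definition eT_v :: "'n::finite \<Rightarrow> ('n,'k::finite) jetT" where
  "eT_v i = (0, (0, axis i 1), (0, 0))"
definition eT_qd :: "'n::finite \<Rightarrow> 'k::finite \<Rightarrow> ('n,'k) jetT" where
  "eT_qd i mu = (0, (0, 0), (axis i (axis mu 1), 0))"
definition eT_vd :: "'n::finite \<Rightarrow> 'k::finite \<Rightarrow> ('n,'k) jetT" where
  "eT_vd i mu = (0, (0, 0), (0, axis i (axis mu 1)))"

definition Ltilde :: "(('n::finite,'k::finite) jet \<Rightarrow> real) \<Rightarrow> ('n,'k) jetT \<Rightarrow> real" where
  "Ltilde L = (\<lambda>(x, (q, v), (Q, V)).
     (\<Sum>i\<in>UNIV. pd L (e_q i) (x, q, Q) * v $ i)
   + (\<Sum>i\<in>UNIV. \<Sum>mu\<in>UNIV. pd L (e_qd i mu) (x, q, Q) * V $ i $ mu))"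

definition dx :: "'k::finite \<Rightarrow> (real^'k \<Rightarrow> 'b::real_normed_vector) \<Rightarrow> real^'k \<Rightarrow> 'b" where
  "dx mu g = pd g (axis mu 1)"

definition jac :: "(real^'k::finite \<Rightarrow> real^'n::finite) \<Rightarrow> real^'k \<Rightarrow> real^'k^'n" where
  "jac phi x = (\<chi> i. \<chi> mu. dx mu (\<lambda>y. phi y $ i) x)"

definition prolong :: "(real^'k::finite \<Rightarrow> real^'n::finite) \<Rightarrow> real^'k \<Rightarrow> ('n,'k) jet" where
  "prolong phi x = (x, phi x, jac phi x)"

definition prolongT :: "(real^'k::finite \<Rightarrow> (real^'n::finite) \<times> (real^'n)) \<Rightarrow> real^'k \<Rightarrow> ('n,'k) jetT" where
  "prolongT psi x = (x, (fst (psi x), snd (psi x)),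
                     (jac (\<lambda>y. fst (psi y)) x, jac (\<lambda>y. snd (psi y)) x))"

definition regular :: "(('n::finite,'k::finite) jet \<Rightarrow> real) \<Rightarrow> bool" where
  "regular L \<longleftrightarrow> (\<forall>z. det (\<chi> (a::'n\<times>'k) (b::'n\<times>'k).
        pd (pd L (e_qd (fst b) (snd b))) (e_qd (fst a) (snd a)) z) \<noteq> 0)"

definition velT :: "('n::finite \<times> 'k::finite) + ('n \<times> 'k) \<Rightarrow> ('n,'k) jetT" where
  "velT a = (case a of Inl (i, mu) \<Rightarrow> eT_qd i mu | Inr (i, mu) \<Rightarrow> eT_vd i mu)"

definition regularT :: "(('n::finite,'k::finite) jetT \<Rightarrow> real) \<Rightarrow> bool" where
  "regularT L \<longleftrightarrow> (\<forall>z. det (\<chi> (a::('n\<times>'k)+('n\<times>'k)) (b::('n\<times>'k)+('n\<times>'k)).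
        pd (pd L (velT b)) (velT a) z) \<noteq> 0)"

end

theory Submission
  imports Defs
begin

lemma pd_hvd:
  assumes "g differentiable (at (z + t0 *\<^sub>R w))"
  shows "((\<lambda>t. g (z + t *\<^sub>R w)) has_vector_derivative pd g w (z + t0 *\<^sub>R w)) (at t0)"
proof -
  obtain g' where g': "(g has_derivative g') (at (z + t0 *\<^sub>R w))"
    using assms unfolding differentiable_def by blast
  have lin: "linear g'" using g' has_derivative_linear by blast
  have h1: "((\<lambda>t. z + t *\<^sub>R w) has_derivative (\<lambda>h. h *\<^sub>R w)) (at t0)" for t0
    by (auto intro!: derivative_eq_intros)
  have "((\<lambda>t. g (z + t *\<^sub>R w)) has_derivative (\<lambda>h. g' (h *\<^sub>R w))) (at t0)"
    by (rule has_derivative_compose[OF h1 g'])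
  hence A: "((\<lambda>t. g (z + t *\<^sub>R w)) has_vector_derivative g' w) (at t0)"
    unfolding has_vector_derivative_def using linear_scale[OF lin] by simp
  have h2: "((\<lambda>t. (z + t0 *\<^sub>R w) + t *\<^sub>R w) has_derivative (\<lambda>h. h *\<^sub>R w)) (at 0)"
    by (auto intro!: derivative_eq_intros)
  have "((\<lambda>t. g ((z + t0 *\<^sub>R w) + t *\<^sub>R w)) has_derivative (\<lambda>h. g' (h *\<^sub>R w))) (at 0)"
    using has_derivative_compose[OF h2] g' by simp
  hence "((\<lambda>t. g ((z + t0 *\<^sub>R w) + t *\<^sub>R w)) has_vector_derivative g' w) (at 0)"
    unfolding has_vector_derivative_def using linear_scale[OF lin] by simp
  hence "pd g w (z + t0 *\<^sub>R w) = g' w" unfolding pd_def by (rule vector_derivative_at)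
  with A show ?thesis by simp
qed

lemma pd_zero: "pd g 0 z = 0"
  unfolding pd_def by (simp add: vector_derivative_const_at)

lemma pd_comp_lin:
  assumes "\<And>z t. p (z + t *\<^sub>R w) = p z + t *\<^sub>R p w"
  shows "pd (\<lambda>z. h (p z)) w z = pd h (p w) (p z)"
  unfolding pd_def assms ..

lemma pd_deriv_real:
  fixes g :: "'a::real_normed_vector \<Rightarrow> real"
  assumes "\<forall>y. g differentiable (at y)"
  shows "((\<lambda>t. g (z + t *\<^sub>R w)) has_real_derivative pd g w (z + t0 *\<^sub>R w)) (at t0)"
  using pd_hvd[of g z t0 w] assms has_real_derivative_iff_has_vector_derivative by blast

lemma schwarz_ex:
  fixes f :: "'a::real_normed_vector \<Rightarrow> real"
  assumes d0: "\<forall>y. f differentiable (at y)"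
    and da: "\<forall>y. pd f a differentiable (at y)"
    and db: "\<forall>y. pd f b differentiable (at y)"
    and s: "s > 0"
  shows "\<exists>\<xi> \<eta> \<xi>' \<eta>'. 0 < \<xi> \<and> \<xi> < s \<and> 0 < \<eta> \<and> \<eta> < s \<and> 0 < \<xi>' \<and> \<xi>' < s \<and> 0 < \<eta>' \<and> \<eta>' < s \<and>
     pd (pd f a) b (p + \<xi> *\<^sub>R a + \<eta> *\<^sub>R b) = pd (pd f b) a (p + \<xi>' *\<^sub>R a + \<eta>' *\<^sub>R b)"
proof -
  define D where "D = f (p + s *\<^sub>R a + s *\<^sub>R b) - f (p + s *\<^sub>R a) - f (p + s *\<^sub>R b) + f p"
  have "\<exists>\<xi>. 0 < \<xi> \<and> \<xi> < s \<and> (\<lambda>t. f ((p + s *\<^sub>R b) + t *\<^sub>R a) - f (p + t *\<^sub>R a)) s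
        - (\<lambda>t. f ((p + s *\<^sub>R b) + t *\<^sub>R a) - f (p + t *\<^sub>R a)) 0
        = (s - 0) * (pd f a ((p + s *\<^sub>R b) + \<xi> *\<^sub>R a) - pd f a (p + \<xi> *\<^sub>R a))"
    by (rule MVT2[OF s]) (intro DERIV_diff pd_deriv_real d0)
  then obtain \<xi> where x1: "0 < \<xi>" "\<xi> < s" and
     x2: "D = s * (pd f a ((p + \<xi> *\<^sub>R a) + s *\<^sub>R b) - pd f a ((p + \<xi> *\<^sub>R a) + 0 *\<^sub>R b))"
    unfolding D_def by (auto simp: algebra_simps)
  have "\<exists>\<eta>. 0 < \<eta> \<and> \<eta> < s \<and> pd f a ((p + \<xi> *\<^sub>R a) + s *\<^sub>R b) - pd f a ((p + \<xi> *\<^sub>R a) + 0 *\<^sub>R b)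
        = (s - 0) * pd (pd f a) b ((p + \<xi> *\<^sub>R a) + \<eta> *\<^sub>R b)"
    by (rule MVT2[OF s]) (intro pd_deriv_real da)
  then obtain \<eta> where y: "0 < \<eta>" "\<eta> < s"
     "D = s * s * pd (pd f a) b (p + \<xi> *\<^sub>R a + \<eta> *\<^sub>R b)" using x2 by auto
  have "\<exists>\<eta>. 0 < \<eta> \<and> \<eta> < s \<and> (\<lambda>t. f ((p + s *\<^sub>R a) + t *\<^sub>R b) - f (p + t *\<^sub>R b)) s
        - (\<lambda>t. f ((p + s *\<^sub>R a) + t *\<^sub>R b) - f (p + t *\<^sub>R b)) 0
        = (s - 0) * (pd f b ((p + s *\<^sub>R a) + \<eta> *\<^sub>R b) - pd f b (p + \<eta> *\<^sub>R b))"
    by (rule MVT2[OF s]) (intro DERIV_diff pd_deriv_real d0)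
  then obtain \<eta>' where x1': "0 < \<eta>'" "\<eta>' < s" and
     x2': "D = s * (pd f b ((p + \<eta>' *\<^sub>R b) + s *\<^sub>R a) - pd f b ((p + \<eta>' *\<^sub>R b) + 0 *\<^sub>R a))"
    unfolding D_def by (auto simp: algebra_simps)
  have "\<exists>\<xi>. 0 < \<xi> \<and> \<xi> < s \<and> pd f b ((p + \<eta>' *\<^sub>R b) + s *\<^sub>R a) - pd f b ((p + \<eta>' *\<^sub>R b) + 0 *\<^sub>R a)
        = (s - 0) * pd (pd f b) a ((p + \<eta>' *\<^sub>R b) + \<xi> *\<^sub>R a)"
    by (rule MVT2[OF s]) (intro pd_deriv_real db)
  then obtain \<xi>' where y': "0 < \<xi>'" "\<xi>' < s"
     "D = s * s * pd (pd f b) a (p + \<xi>' *\<^sub>R a + \<eta>' *\<^sub>R b)" using x2' by (auto simp: algebra_simps)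
  have "pd (pd f a) b (p + \<xi> *\<^sub>R a + \<eta> *\<^sub>R b) = pd (pd f b) a (p + \<xi>' *\<^sub>R a + \<eta>' *\<^sub>R b)"
    using y(3) y'(3) s by simp
  thus ?thesis using x1 y x1' y' by blast
qed

lemma schwarz:
  fixes f :: "'a::real_normed_vector \<Rightarrow> real"
  assumes d0: "\<forall>y. f differentiable (at y)"
    and da: "\<forall>y. pd f a differentiable (at y)"
    and db: "\<forall>y. pd f b differentiable (at y)"
    and dab: "\<forall>y. pd (pd f a) b differentiable (at y)"
    and dba: "\<forall>y. pd (pd f b) a differentiable (at y)"
  shows "pd (pd f a) b p = pd (pd f b) a p"
proof (rule ccontr)
  let ?G1 = "pd (pd f a) b" and ?G2 = "pd (pd f b) a"
  assume ne: "?G1 p \<noteq> ?G2 p"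
  define e where "e = \<bar>?G1 p - ?G2 p\<bar> / 2"
  have e: "e > 0" using ne unfolding e_def by simp
  have c1: "continuous (at p) ?G1" using dab differentiable_imp_continuous_within by blast
  have c2: "continuous (at p) ?G2" using dba differentiable_imp_continuous_within by blast
  obtain d1 where d1: "d1 > 0" "\<And>y. dist y p < d1 \<Longrightarrow> dist (?G1 y) (?G1 p) < e"
    using c1 e unfolding continuous_at_eps_delta by blast
  obtain d2 where d2: "d2 > 0" "\<And>y. dist y p < d2 \<Longrightarrow> dist (?G2 y) (?G2 p) < e"
    using c2 e unfolding continuous_at_eps_delta by blast
  define s where "s = min d1 d2 / (norm a + norm b + 1)"
  have s: "s > 0" using d1(1) d2(1) unfolding s_def
    by (intro divide_pos_pos) (auto intro: add_nonneg_pos)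
  have sab: "s * (norm a + norm b) < min d1 d2"
  proof -
    have "s * (norm a + norm b) < s * (norm a + norm b + 1)" using s by simp
    also have "\<dots> = min d1 d2"
    proof -
      have "norm a + norm b + 1 > 0" using norm_ge_zero[of a] norm_ge_zero[of b] by linarith
      thus ?thesis unfolding s_def by simp
    qed
    finally show ?thesis .
  qed
  have small: "dist (p + x *\<^sub>R a + y *\<^sub>R b) p < min d1 d2" if "0 < x" "x < s" "0 < y" "y < s" for x y
  proof -
    have "dist (p + x *\<^sub>R a + y *\<^sub>R b) p = norm (x *\<^sub>R a + y *\<^sub>R b)"
      by (simp add: dist_norm algebra_simps)
    also have "\<dots> \<le> x * norm a + y * norm b"
      using norm_triangle_ineq[of "x *\<^sub>R a" "y *\<^sub>R b"] that by simp
    also have "\<dots> \<le> s * norm a + s * norm b"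
      using that by (intro add_mono mult_right_mono) auto
    finally show ?thesis using sab by (simp add: algebra_simps)
  qed
  obtain \<xi> \<eta> \<xi>' \<eta>' where xe: "0 < \<xi>" "\<xi> < s" "0 < \<eta>" "\<eta> < s" "0 < \<xi>'" "\<xi>' < s" "0 < \<eta>'" "\<eta>' < s"
    and eq: "?G1 (p + \<xi> *\<^sub>R a + \<eta> *\<^sub>R b) = ?G2 (p + \<xi>' *\<^sub>R a + \<eta>' *\<^sub>R b)"
    using schwarz_ex[OF d0 da db s] by blast
  have "dist (?G1 (p + \<xi> *\<^sub>R a + \<eta> *\<^sub>R b)) (?G1 p) < e"
    using d1(2) small[OF xe(1-4)] by simp
  moreover have "dist (?G2 (p + \<xi>' *\<^sub>R a + \<eta>' *\<^sub>R b)) (?G2 p) < e"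
    using d2(2) small[OF xe(5-8)] by simp
  ultimately show False using eq unfolding e_def dist_real_def by (simp add: abs_if split: if_splits)
qed

definition Tform :: "('n::finite \<Rightarrow> ('n,'k::finite) jet \<Rightarrow> real) \<Rightarrow> ('n \<Rightarrow> 'k \<Rightarrow> ('n,'k) jet \<Rightarrow> real) \<Rightarrow> ('n,'k) jetT \<Rightarrow> real" where
  "Tform F G = (\<lambda>(x, (q, v), (Q, V)).
     (\<Sum>i\<in>UNIV. F i (x, q, Q) * v $ i) + (\<Sum>i\<in>UNIV. \<Sum>mu\<in>UNIV. G i mu (x, q, Q) * V $ i $ mu))"

lemma Ltilde_Tform: "Ltilde L = Tform (\<lambda>j. pd L (e_q j)) (\<lambda>j g. pd L (e_qd j g))"
  unfolding Ltilde_def Tform_def ..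

lemma pd_Tform:
  assumes dF: "\<And>j y. F j differentiable (at y)" and dG: "\<And>j g y. G j g differentiable (at y)"
  shows "pd (Tform F G) (wx, (wq, wv), (wQ, wV)) (x, (q, v), (Q, V)) =
     (\<Sum>j\<in>UNIV. pd (F j) (wx, wq, wQ) (x, q, Q) * v $ j + F j (x, q, Q) * wv $ j)
   + (\<Sum>j\<in>UNIV. \<Sum>g\<in>UNIV. pd (G j g) (wx, wq, wQ) (x, q, Q) * V $ j $ g + G j g (x, q, Q) * wV $ j $ g)"
proof -
  let ?p = "(x, q, Q)" and ?w = "(wx, wq, wQ)"
  have eq: "Tform F G ((x, (q, v), (Q, V)) + t *\<^sub>R (wx, (wq, wv), (wQ, wV))) =
     (\<Sum>j\<in>UNIV. F j (?p + t *\<^sub>R ?w) * (v $ j + t * wv $ j))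
   + (\<Sum>j\<in>UNIV. \<Sum>g\<in>UNIV. G j g (?p + t *\<^sub>R ?w) * (V $ j $ g + t * wV $ j $ g))" for t
    unfolding Tform_def by simp
  have dF': "((\<lambda>t. F j (?p + t *\<^sub>R ?w)) has_real_derivative pd (F j) ?w ?p) (at 0)" for j
    using pd_deriv_real[of "F j" ?p ?w 0] dF by simp
  have dG': "((\<lambda>t. G j g (?p + t *\<^sub>R ?w)) has_real_derivative pd (G j g) ?w ?p) (at 0)" for j g
    using pd_deriv_real[of "G j g" ?p ?w 0] dG by simp
  have "((\<lambda>t. Tform F G ((x, (q, v), (Q, V)) + t *\<^sub>R (wx, (wq, wv), (wQ, wV)))) has_real_derivative
     (\<Sum>j\<in>UNIV. pd (F j) ?w ?p * (v $ j + 0 * wv $ j) + F j (?p + 0 *\<^sub>R ?w) * wv $ j)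
   + (\<Sum>j\<in>UNIV. \<Sum>g\<in>UNIV. pd (G j g) ?w ?p * (V $ j $ g + 0 * wV $ j $ g) + G j g (?p + 0 *\<^sub>R ?w) * wV $ j $ g)) (at 0)"
    unfolding eq
    apply (intro DERIV_add DERIV_sum DERIV_mult dF' dG')
    using dF' dG' by (auto intro!: derivative_eq_intros)
  hence "((\<lambda>t. Tform F G ((x, (q, v), (Q, V)) + t *\<^sub>R (wx, (wq, wv), (wQ, wV)))) has_vector_derivative
     (\<Sum>j\<in>UNIV. pd (F j) ?w ?p * v $ j + F j ?p * wv $ j)
   + (\<Sum>j\<in>UNIV. \<Sum>g\<in>UNIV. pd (G j g) ?w ?p * V $ j $ g + G j g ?p * wV $ j $ g)) (at 0)"
    by (simp add: has_real_derivative_iff_has_vector_derivative)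
  thus ?thesis unfolding pd_def by (rule vector_derivative_at)
qed

lemma pd_zero3: "pd g (0, 0, 0) z = 0"
  unfolding pd_def by (simp add: vector_derivative_const_at)

lemma axis_sum1: "(\<Sum>j\<in>UNIV. c j * axis i (1::real) $ j) = c i"
proof -
  have "(\<lambda>j. c j * axis i (1::real) $ j) = (\<lambda>j. if j = i then c j else 0)"
    by (auto simp: axis_def)
  hence "(\<Sum>j\<in>UNIV. c j * axis i (1::real) $ j) = (\<Sum>j\<in>UNIV. if j = i then c j else 0)" by (rule arg_cong)
  thus ?thesis by simp
qed
lemma axis_sum2: "(\<Sum>j\<in>UNIV. \<Sum>g\<in>UNIV. c j g * axis i (axis mu (1::real)) $ j $ g) = c i mu"
proof -
  have "(\<lambda>j. \<Sum>g\<in>UNIV. c j g * axis i (axis mu (1::real)) $ j $ g) = (\<lambda>j. if j = i then c j mu else 0)"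
    by (auto simp: axis_def intro!: ext) (simp add: if_distrib cong: if_cong)
  hence "(\<Sum>j\<in>UNIV. \<Sum>g\<in>UNIV. c j g * axis i (axis mu (1::real)) $ j $ g) = (\<Sum>j\<in>UNIV. if j = i then c j mu else 0)" by (rule arg_cong)
  thus ?thesis by simp
qed

context
  fixes L :: "('n::finite, 'k::finite) jet \<Rightarrow> real"
  assumes S: "smooth_on UNIV L"
begin

lemma dL: "iter_pd ws L differentiable (at y)"
  using S unfolding smooth_on_def by blast

lemma dL1: "pd L w differentiable (at y)"
  using dL[of "[w]"] by simp
lemma dL2: "pd (pd L w) w' differentiable (at y)"
  using dL[of "[w', w]"] by simp

lemma pdL_qd: "pd (Ltilde L) (eT_qd i mu) =
   Tform (\<lambda>j. pd (pd L (e_q j)) (e_qd i mu)) (\<lambda>j g. pd (pd L (e_qd j g)) (e_qd i mu))"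
proof
  fix z :: "('n,'k) jetT"
  obtain x q v Q V where z: "z = (x, (q, v), (Q, V))" by (metis prod.collapse)
  show "pd (Ltilde L) (eT_qd i mu) z = Tform (\<lambda>j. pd (pd L (e_q j)) (e_qd i mu)) (\<lambda>j g. pd (pd L (e_qd j g)) (e_qd i mu)) z"
    unfolding z Ltilde_Tform eT_qd_def
    by (subst pd_Tform) (auto intro: dL1 simp: Tform_def e_qd_def)
qed

lemma pdL_q: "pd (Ltilde L) (eT_q i) =
   Tform (\<lambda>j. pd (pd L (e_q j)) (e_q i)) (\<lambda>j g. pd (pd L (e_qd j g)) (e_q i))"
proof
  fix z :: "('n,'k) jetT"
  obtain x q v Q V where z: "z = (x, (q, v), (Q, V))" by (metis prod.collapse)
  show "pd (Ltilde L) (eT_q i) z = Tform (\<lambda>j. pd (pd L (e_q j)) (e_q i)) (\<lambda>j g. pd (pd L (e_qd j g)) (e_q i)) z"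
    unfolding z Ltilde_Tform eT_q_def
    by (subst pd_Tform) (auto intro: dL1 simp: Tform_def e_q_def)
qed

lemma pdL_vd: "pd (Ltilde L) (eT_vd i mu) = (\<lambda>(x, (q, v), (Q, V)). pd L (e_qd i mu) (x, q, Q))"
proof
  fix z :: "('n,'k) jetT"
  obtain x q v Q V where z: "z = (x, (q, v), (Q, V))" by (metis prod.collapse)
  show "pd (Ltilde L) (eT_vd i mu) z = (\<lambda>(x, (q, v), (Q, V)). pd L (e_qd i mu) (x, q, Q)) z"
    unfolding z Ltilde_Tform eT_vd_def
    by (subst pd_Tform) (auto intro: dL1 simp: pd_zero3 axis_sum2)
qed

lemma pdL_v: "pd (Ltilde L) (eT_v i) = (\<lambda>(x, (q, v), (Q, V)). pd L (e_q i) (x, q, Q))"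
proof
  fix z :: "('n,'k) jetT"
  obtain x q v Q V where z: "z = (x, (q, v), (Q, V))" by (metis prod.collapse)
  show "pd (Ltilde L) (eT_v i) z = (\<lambda>(x, (q, v), (Q, V)). pd L (e_q i) (x, q, Q)) z"
    unfolding z Ltilde_Tform eT_v_def
    by (subst pd_Tform) (auto intro: dL1 simp: pd_zero3 axis_sum1)
qed

lemma symL: "pd (pd L a) b p = pd (pd L b) a p"
  by (rule schwarz) (auto intro: dL1 dL2 simp: dL[of "[]", simplified])

end

lemma vec_eqI': "(\<And>i. x $ i = y $ i) \<Longrightarrow> x = y" by (simp add: vec_eq_iff)

lemma pd_proj:
  "pd (\<lambda>(x, (q, v), (Q, V)). h (x, q, Q)) (wx, (wq, wv), (wQ, wV)) (x, (q, v), (Q, V)) = pd h (wx, wq, wQ) (x, q, Q)"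
  unfolding pd_def by simp

lemma det_ker:
  fixes B :: "real^'m^'m"
  assumes "det B \<noteq> 0" "B *v y = 0" shows "y = 0"
proof -
  have "\<exists>B'. B' ** B = mat 1" using assms(1) unfolding invertible_det_nz[symmetric] invertible_left_inverse .
  thus ?thesis using assms(2) unfolding matrix_left_invertible_ker by blast
qed

lemma block_det:
  fixes A :: "real^('m::finite + 'm)^('m + 'm)" and M C :: "real^'m^'m"
  assumes dM: "det M \<noteq> 0"
    and A1: "\<And>a b. A $ Inl a $ Inl b = C $ a $ b"
    and A2: "\<And>a b. A $ Inl a $ Inr b = M $ a $ b"
    and A3: "\<And>a b. A $ Inr a $ Inl b = M $ b $ a"
    and A4: "\<And>a b. A $ Inr a $ Inr b = 0"
  shows "det A \<noteq> 0"
proof -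
  have "y = 0" if Ay: "A *v y = 0" for y
  proof -
    define u where "u = (\<chi> b. y $ Inl b)"
    define w where "w = (\<chi> b. y $ Inr b)"
    have sp: "(A *v y) $ c = (\<Sum>b\<in>UNIV. A $ c $ Inl b * u $ b) + (\<Sum>b\<in>UNIV. A $ c $ Inr b * w $ b)" for c
    proof -
      have "(A *v y) $ c = (\<Sum>d\<in>UNIV <+> UNIV. A $ c $ d * y $ d)"
        by (simp add: matrix_vector_mult_def)
      also have "\<dots> = (\<Sum>b\<in>UNIV. A $ c $ Inl b * u $ b) + (\<Sum>b\<in>UNIV. A $ c $ Inr b * w $ b)"
        by (subst sum.Plus) (auto simp: u_def w_def)
      finally show ?thesis .
    qed
    have "transpose M *v u = 0"
    proof (rule vec_eqI')
      fix a
      have "0 = (A *v y) $ Inr a" using Ay by simp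
      also have "\<dots> = (transpose M *v u) $ a"
        unfolding sp by (simp add: A3 A4 matrix_vector_mult_def transpose_def)
      finally show "(transpose M *v u) $ a = 0 $ a" by simp
    qed
    hence u0: "u = 0" using det_ker[of "transpose M" u] dM by (simp add: det_transpose)
    have "M *v w = 0"
    proof (rule vec_eqI')
      fix a
      have "0 = (A *v y) $ Inl a" using Ay by simp
      also have "\<dots> = (M *v w) $ a"
        unfolding sp by (simp add: A2 u0 matrix_vector_mult_def)
      finally show "(M *v w) $ a = 0 $ a" by simp
    qed
    hence w0: "w = 0" using det_ker[of M w] dM by simp
    show "y = 0"
    proof (rule vec_eqI')
      fix c show "y $ c = 0 $ c"
        using u0 w0 unfolding u_def w_def vec_eq_iff by (cases c) auto
    qed
  qed
  hence "\<exists>B. B ** A = mat 1" unfolding matrix_left_invertible_ker by blast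
  thus ?thesis unfolding invertible_det_nz[symmetric] invertible_left_inverse .
qed

theorem mainTheorem1:
  fixes L :: "('n::finite, 'k::finite) jet \<Rightarrow> real"
    and U :: "(real^'k) set"
    and psi :: "real^'k \<Rightarrow> (real^'n) \<times> (real^'n)"
  assumes L_smooth: "smooth_on UNIV L"
    and U_open: "open U"
    and psi_smooth: "smooth_on U psi"
  shows "((\<forall>x\<in>U. \<forall>i.
            (\<Sum>mu\<in>UNIV. dx mu (\<lambda>y. pd (Ltilde L) (eT_qd i mu) (prolongT psi y)) x)
              - pd (Ltilde L) (eT_q i) (prolongT psi x) = 0
          \<and> (\<Sum>mu\<in>UNIV. dx mu (\<lambda>y. pd (Ltilde L) (eT_vd i mu) (prolongT psi y)) x)
              - pd (Ltilde L) (eT_v i) (prolongT psi x) = 0)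
        \<longleftrightarrow>
         (\<forall>x\<in>U. \<forall>i.
            (let q = (\<lambda>y. fst (psi y)); v = (\<lambda>y. snd (psi y)) in
              (\<Sum>mu\<in>UNIV. dx mu (\<lambda>y.
                   (\<Sum>j\<in>UNIV. pd (pd L (e_qd i mu)) (e_q j) (prolong q y) * v y $ j)
                 + (\<Sum>j\<in>UNIV. \<Sum>gam\<in>UNIV. pd (pd L (e_qd i mu)) (e_qd j gam) (prolong q y)
                        * jac v y $ j $ gam)) x)
              - (\<Sum>j\<in>UNIV. pd (pd L (e_q j)) (e_q i) (prolong q x) * v x $ j)
              - (\<Sum>j\<in>UNIV. \<Sum>gam\<in>UNIV. pd (pd L (e_qd j gam)) (e_q i) (prolong q x)
                        * jac v x $ j $ gam) = 0
            \<and> (\<Sum>mu\<in>UNIV. dx mu (\<lambda>y. pd L (e_qd i mu) (prolong q y)) x)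
              - pd L (e_q i) (prolong q x) = 0)))
     \<and> (regular L \<longrightarrow> regularT (Ltilde L))"
  proof -
  let ?q = "\<lambda>y. fst (psi y)" and ?v = "\<lambda>y. snd (psi y)"
  note sym = symL[OF L_smooth]
  have E1: "pd (Ltilde L) (eT_qd i mu) (prolongT psi y) =
     (\<Sum>j\<in>UNIV. pd (pd L (e_qd i mu)) (e_q j) (prolong ?q y) * ?v y $ j)
   + (\<Sum>j\<in>UNIV. \<Sum>gam\<in>UNIV. pd (pd L (e_qd i mu)) (e_qd j gam) (prolong ?q y) * jac ?v y $ j $ gam)" for i mu y
  proof -
    have "pd (Ltilde L) (eT_qd i mu) (prolongT psi y) =
     (\<Sum>j\<in>UNIV. pd (pd L (e_q j)) (e_qd i mu) (prolong ?q y) * ?v y $ j)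
   + (\<Sum>j\<in>UNIV. \<Sum>gam\<in>UNIV. pd (pd L (e_qd j gam)) (e_qd i mu) (prolong ?q y) * jac ?v y $ j $ gam)"
      unfolding pdL_qd[OF L_smooth] Tform_def prolongT_def prolong_def by (simp add: prod.case_eq_if)
    also have "\<dots> = (\<Sum>j\<in>UNIV. pd (pd L (e_qd i mu)) (e_q j) (prolong ?q y) * ?v y $ j)
   + (\<Sum>j\<in>UNIV. \<Sum>gam\<in>UNIV. pd (pd L (e_qd i mu)) (e_qd j gam) (prolong ?q y) * jac ?v y $ j $ gam)"
      by (intro arg_cong2[where f="(+)"] sum.cong refl arg_cong2[where f="(*)"] sym)
    finally show ?thesis .
  qed
  have E2: "pd (Ltilde L) (eT_q i) (prolongT psi x) =
     (\<Sum>j\<in>UNIV. pd (pd L (e_q j)) (e_q i) (prolong ?q x) * ?v x $ j)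
   + (\<Sum>j\<in>UNIV. \<Sum>gam\<in>UNIV. pd (pd L (e_qd j gam)) (e_q i) (prolong ?q x) * jac ?v x $ j $ gam)" for i x
    unfolding pdL_q[OF L_smooth] Tform_def prolongT_def prolong_def by (simp add: prod.case_eq_if)
  have E3: "pd (Ltilde L) (eT_vd i mu) (prolongT psi y) = pd L (e_qd i mu) (prolong ?q y)" for i mu y
    unfolding pdL_vd[OF L_smooth] prolongT_def prolong_def by (simp add: prod.case_eq_if)
  have E4: "pd (Ltilde L) (eT_v i) (prolongT psi y) = pd L (e_q i) (prolong ?q y)" for i y
    unfolding pdL_v[OF L_smooth] prolongT_def prolong_def by (simp add: prod.case_eq_if)
  have P2: "regular L \<longrightarrow> regularT (Ltilde L)"
  proof
    assume R: "regular L"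
    show "regularT (Ltilde L)" unfolding regularT_def
    proof
      fix z :: "('n,'k) jetT"
      obtain x q v Q V where z: "z = (x, (q, v), (Q, V))" by (metis prod.collapse)
      define M :: "real^('n\<times>'k)^('n\<times>'k)" where
        "M = (\<chi> a b. pd (pd L (e_qd (fst b) (snd b))) (e_qd (fst a) (snd a)) (x, q, Q))"
      have dM: "det M \<noteq> 0" using R unfolding regular_def M_def by blast
      define A :: "real^(('n\<times>'k)+('n\<times>'k))^(('n\<times>'k)+('n\<times>'k))" where
        "A = (\<chi> a b. pd (pd (Ltilde L) (velT b)) (velT a) z)"
      have "det A \<noteq> 0"
      proof (rule block_det[OF dM])
        fix a b :: "'n \<times> 'k"
        show "A $ Inl a $ Inl b = (\<chi> a b. A $ Inl a $ Inl b) $ a $ b" by simp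
        obtain i mu where a: "a = (i, mu)" by (cases a)
        obtain j g where b: "b = (j, g)" by (cases b)
        show "A $ Inl a $ Inr b = M $ a $ b"
          unfolding A_def M_def a b z velT_def
          by (simp add: pdL_vd[OF L_smooth] eT_qd_def pd_proj e_qd_def)
        show "A $ Inr a $ Inl b = M $ b $ a"
          unfolding A_def M_def a b z velT_def
          by (simp add: pdL_qd[OF L_smooth] eT_vd_def, subst pd_Tform)
             (auto intro: dL2[OF L_smooth] simp: pd_zero3 axis_sum2)
        show "A $ Inr a $ Inr b = 0"
          unfolding A_def a b z velT_def vec_lambda_beta sum.case prod.case pdL_vd[OF L_smooth]
          by (simp add: eT_vd_def pd_proj pd_zero3)
      qed
      thus "det (\<chi> a b. pd (pd (Ltilde L) (velT b)) (velT a) z) \<noteq> 0" unfolding A_def .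
    qed
  qed
  show ?thesis using P2 by (simp add: E1 E2 E3 E4 Let_def diff_diff_eq)
qed

end
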